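(* Let $R$ be a commutative Artinian ring, $M$ a non-zero $R$-module, and $M=\sum_{i=1}^n K_i$ a minimal PS-hollow representation of $M$, where $K_i$ is $H_i$-PS-hollow for each $i$. Suppose that every nonzero submodule of $In(K_i)$ is $H_i$-PS-hollow for all $i\in\{1,\dots,n\}$. Then $M=\bigoplus_{i=1}^n K_i$.
   Context: An $R$-submodule $N\leq M$ is PS-hollow iff for every ideal $I\leq R$ and every submodule $L\leq M$: $N\subseteq IM+L$ implies $N\subseteq IM$ or $N\subseteq L$. For PS-hollow $N$: $A_N=\{I\leq R: N\subseteq IM\}$, $H_N$ the set of minimal elements of $A_N$, $In(N)=\bigcap_{I\in H_N}IM$ ($=M$ if $H_N=\emptyset$); $N$ is $H$-PS-hollow iff PS-hollow with $H_N=H$. A minimal PS-hollow representation is $M=\sum_{i=1}^n K_i$ with each $K_i$ $H_i$-PS-hollow, $In(K_1),\dots,In(K_n)$ pairwise incomparable, and $K_j\not\subseteq\sum_{i\neq j}K_i$ for all $j$. *)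

theory Defs
  imports "HOL-Algebra.Algebra"
begin

definition artinian_cring :: "('a, 'c) ring_scheme \<Rightarrow> bool" where
  "artinian_cring R \<longleftrightarrow> cring R \<and>
     (\<forall>f :: nat \<Rightarrow> 'a set. (\<forall>k. ideal (f k) R) \<and> (\<forall>k. f (Suc k) \<subseteq> f k)
        \<longrightarrow> (\<exists>N. \<forall>k\<ge>N. f k = f N))"

definition gen_submodule :: "('a, 'c) ring_scheme \<Rightarrow> ('a, 'b, 'd) module_scheme \<Rightarrow> 'b set \<Rightarrow> 'b set" where
  "gen_submodule R M S = \<Inter>{N. submodule N R M \<and> S \<subseteq> N}"

definition ideal_mod :: "('a, 'c) ring_scheme \<Rightarrow> ('a, 'b, 'd) module_scheme \<Rightarrow> 'a set \<Rightarrow> 'b set" where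
  "ideal_mod R M I = gen_submodule R M {a \<odot>\<^bsub>M\<^esub> m | a m. a \<in> I \<and> m \<in> carrier M}"

definition sum_submods :: "('a, 'c) ring_scheme \<Rightarrow> ('a, 'b, 'd) module_scheme \<Rightarrow> (nat \<Rightarrow> 'b set) \<Rightarrow> nat set \<Rightarrow> 'b set" where
  "sum_submods R M K J = gen_submodule R M (\<Union>i\<in>J. K i)"

definition PS_hollow :: "('a, 'c) ring_scheme \<Rightarrow> ('a, 'b, 'd) module_scheme \<Rightarrow> 'b set \<Rightarrow> bool" where
  "PS_hollow R M N \<longleftrightarrow> submodule N R M \<and>
     (\<forall>I L. ideal I R \<longrightarrow> submodule L R M \<longrightarrow>
        N \<subseteq> ideal_mod R M I <+>\<^bsub>M\<^esub> L \<longrightarrow> N \<subseteq> ideal_mod R M I \<or> N \<subseteq> L)"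

definition A_set :: "('a, 'c) ring_scheme \<Rightarrow> ('a, 'b, 'd) module_scheme \<Rightarrow> 'b set \<Rightarrow> 'a set set" where
  "A_set R M N = {I. ideal I R \<and> N \<subseteq> ideal_mod R M I}"

definition H_set :: "('a, 'c) ring_scheme \<Rightarrow> ('a, 'b, 'd) module_scheme \<Rightarrow> 'b set \<Rightarrow> 'a set set" where
  "H_set R M N = {I \<in> A_set R M N. \<forall>J \<in> A_set R M N. J \<subseteq> I \<longrightarrow> J = I}"

definition In_sub :: "('a, 'c) ring_scheme \<Rightarrow> ('a, 'b, 'd) module_scheme \<Rightarrow> 'b set \<Rightarrow> 'b set" where
  "In_sub R M N = (if H_set R M N = {} then carrier M else (\<Inter>I \<in> H_set R M N. ideal_mod R M I))"

definition H_PS_hollow :: "('a, 'c) ring_scheme \<Rightarrow> ('a, 'b, 'd) module_scheme \<Rightarrow> 'a set set \<Rightarrow> 'b set \<Rightarrow> bool" where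
  "H_PS_hollow R M H N \<longleftrightarrow> PS_hollow R M N \<and> H_set R M N = H"

definition min_PS_hollow_rep :: "('a, 'c) ring_scheme \<Rightarrow> ('a, 'b, 'd) module_scheme \<Rightarrow> nat \<Rightarrow> (nat \<Rightarrow> 'b set) \<Rightarrow> (nat \<Rightarrow> 'a set set) \<Rightarrow> bool" where
  "min_PS_hollow_rep R M n K H \<longleftrightarrow>
     carrier M = sum_submods R M K {..<n} \<and>
     (\<forall>i<n. H_PS_hollow R M (H i) (K i)) \<and>
     (\<forall>i<n. \<forall>j<n. i \<noteq> j \<longrightarrow> \<not> In_sub R M (K i) \<subseteq> In_sub R M (K j)) \<and>
     (\<forall>j<n. \<not> K j \<subseteq> sum_submods R M K ({..<n} - {j}))"

definition is_direct_sum :: "('a, 'c) ring_scheme \<Rightarrow> ('a, 'b, 'd) module_scheme \<Rightarrow> nat \<Rightarrow> (nat \<Rightarrow> 'b set) \<Rightarrow> bool" where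
  "is_direct_sum R M n K \<longleftrightarrow>
     carrier M = sum_submods R M K {..<n} \<and>
     (\<forall>j<n. K j \<inter> sum_submods R M K ({..<n} - {j}) = {\<zero>\<^bsub>M\<^esub>})"

end

theory Submission
  imports Defs
begin

context module begin

lemma zero_in: assumes "submodule N R M" shows "\<zero>\<^bsub>M\<^esub> \<in> N"
proof -
  obtain x where x: "x \<in> N" using submoduleE(2)[OF assms] by blast
  have xc: "x \<in> carrier M" using x submoduleE(1)[OF assms] by blast
  have "x \<oplus>\<^bsub>M\<^esub> \<ominus>\<^bsub>M\<^esub> x \<in> N" using x submoduleE(3,5)[OF assms] by blast
  then show ?thesis using xc by (simp add: r_neg)
qed

lemma gen_least: "submodule N R M \<Longrightarrow> S \<subseteq> N \<Longrightarrow> gen_submodule R M S \<subseteq> N"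
  unfolding gen_submodule_def by blast

lemma gen_incl: "S \<subseteq> gen_submodule R M S"
  unfolding gen_submodule_def by blast

lemma gen_mono: "S \<subseteq> S' \<Longrightarrow> gen_submodule R M S \<subseteq> gen_submodule R M S'"
  unfolding gen_submodule_def by blast

lemma gen_sub: assumes "S \<subseteq> carrier M" shows "submodule (gen_submodule R M S) R M"
proof (rule submoduleI)
  have c: "carrier M \<in> {N. submodule N R M \<and> S \<subseteq> N}" using carrier_is_submodule assms by auto
  show "gen_submodule R M S \<subseteq> carrier M" unfolding gen_submodule_def using c by blast
  show "\<zero>\<^bsub>M\<^esub> \<in> gen_submodule R M S" unfolding gen_submodule_def
    using zero_in by blast
  show "\<ominus>\<^bsub>M\<^esub> a \<in> gen_submodule R M S" if "a \<in> gen_submodule R M S" for a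
    using that submoduleE(3) unfolding gen_submodule_def by blast
  show "a \<oplus>\<^bsub>M\<^esub> b \<in> gen_submodule R M S" if "a \<in> gen_submodule R M S" "b \<in> gen_submodule R M S" for a b
    using that submoduleE(5) unfolding gen_submodule_def by blast
  show "a \<odot>\<^bsub>M\<^esub> b \<in> gen_submodule R M S" if "a \<in> carrier R" "b \<in> gen_submodule R M S" for a b
    using that submoduleE(4) unfolding gen_submodule_def by blast
qed

lemma sum_sub: assumes "submodule A R M" "submodule B R M" shows "submodule (A <+>\<^bsub>M\<^esub> B) R M"
proof (rule submoduleI)
  have A: "A \<subseteq> carrier M" and B: "B \<subseteq> carrier M" using assms submoduleE(1) by auto
  show "A <+>\<^bsub>M\<^esub> B \<subseteq> carrier M" using A B unfolding set_add_def' by auto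
  show "\<zero>\<^bsub>M\<^esub> \<in> A <+>\<^bsub>M\<^esub> B" unfolding set_add_def'
    using assms zero_in by (auto intro!: bexI[of _ "\<zero>\<^bsub>M\<^esub>"])
  show "\<ominus>\<^bsub>M\<^esub> a \<in> A <+>\<^bsub>M\<^esub> B" if H: "a \<in> A <+>\<^bsub>M\<^esub> B" for a
  proof -
    obtain x y where "x \<in> A" "y \<in> B" "a = x \<oplus>\<^bsub>M\<^esub> y" using H unfolding set_add_def' by blast
    moreover have "\<ominus>\<^bsub>M\<^esub> (x \<oplus>\<^bsub>M\<^esub> y) = \<ominus>\<^bsub>M\<^esub> x \<oplus>\<^bsub>M\<^esub> \<ominus>\<^bsub>M\<^esub> y"
      using calculation A B by (simp add: minus_add subsetD)
    ultimately show ?thesis using assms submoduleE(3) unfolding set_add_def' by fastforce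
  qed
  show "a \<oplus>\<^bsub>M\<^esub> b \<in> A <+>\<^bsub>M\<^esub> B" if H: "a \<in> A <+>\<^bsub>M\<^esub> B" "b \<in> A <+>\<^bsub>M\<^esub> B" for a b
  proof -
    obtain x y where xy: "x \<in> A" "y \<in> B" "a = x \<oplus>\<^bsub>M\<^esub> y" using H unfolding set_add_def' by blast
    obtain u v where uv: "u \<in> A" "v \<in> B" "b = u \<oplus>\<^bsub>M\<^esub> v" using H unfolding set_add_def' by blast
    have "a \<oplus>\<^bsub>M\<^esub> b = (x \<oplus>\<^bsub>M\<^esub> u) \<oplus>\<^bsub>M\<^esub> (y \<oplus>\<^bsub>M\<^esub> v)"
      using xy uv A B by (simp add: a_ac subsetD)
    then show ?thesis using xy uv assms submoduleE(5) unfolding set_add_def' by fastforce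
  qed
  show "r \<odot>\<^bsub>M\<^esub> a \<in> A <+>\<^bsub>M\<^esub> B" if H: "r \<in> carrier R" "a \<in> A <+>\<^bsub>M\<^esub> B" for r a
  proof -
    obtain x y where xy: "x \<in> A" "y \<in> B" "a = x \<oplus>\<^bsub>M\<^esub> y" using H unfolding set_add_def' by blast
    have "r \<odot>\<^bsub>M\<^esub> a = r \<odot>\<^bsub>M\<^esub> x \<oplus>\<^bsub>M\<^esub> r \<odot>\<^bsub>M\<^esub> y"
      using xy A B H by (simp add: smult_r_distr subsetD)
    then show ?thesis using xy H assms submoduleE(4) unfolding set_add_def' by fastforce
  qed
qed

lemma sum_incl1: assumes "submodule A R M" "submodule B R M" shows "A \<subseteq> A <+>\<^bsub>M\<^esub> B"
proof
  fix a assume a: "a \<in> A"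
  have "a = a \<oplus>\<^bsub>M\<^esub> \<zero>\<^bsub>M\<^esub>" using a submoduleE(1)[OF assms(1)] by (simp add: subsetD)
  moreover have "\<zero>\<^bsub>M\<^esub> \<in> B" using assms(2) by (rule zero_in)
  ultimately show "a \<in> A <+>\<^bsub>M\<^esub> B" using a unfolding set_add_def' by blast
qed

lemma sum_incl2: assumes "submodule A R M" "submodule B R M" shows "B \<subseteq> A <+>\<^bsub>M\<^esub> B"
proof
  fix a assume a: "a \<in> B"
  have "a = \<zero>\<^bsub>M\<^esub> \<oplus>\<^bsub>M\<^esub> a" using a submoduleE(1)[OF assms(2)] by (simp add: subsetD)
  moreover have "\<zero>\<^bsub>M\<^esub> \<in> A" using assms(1) by (rule zero_in)
  ultimately show "a \<in> A <+>\<^bsub>M\<^esub> B" using a unfolding set_add_def' by blast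
qed

lemma int_sub: assumes "submodule A R M" "submodule B R M" shows "submodule (A \<inter> B) R M"
  by (rule submoduleI) (use submoduleE[OF assms(1)] submoduleE[OF assms(2)] zero_in[OF assms(1)] zero_in[OF assms(2)] in auto)

lemma zero_sub: "submodule {\<zero>\<^bsub>M\<^esub>} R M"
  by (rule submoduleI) auto


lemma ideal_mod_sub: assumes "I \<subseteq> carrier R" shows "submodule (ideal_mod R M I) R M"
  unfolding ideal_mod_def using assms by (intro gen_sub) auto

lemma ideal_mod_mono: "I \<subseteq> J \<Longrightarrow> ideal_mod R M I \<subseteq> ideal_mod R M J"
  unfolding ideal_mod_def by (rule gen_mono) blast

lemma sum_submods_sub: assumes "\<forall>i\<in>J. submodule (K i) R M"
  shows "submodule (sum_submods R M K J) R M"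
  unfolding sum_submods_def using assms submoduleE(1) by (intro gen_sub) blast

lemma sum_submods_empty: "sum_submods R M K {} = {\<zero>\<^bsub>M\<^esub>}"
proof
  show "sum_submods R M K {} \<subseteq> {\<zero>\<^bsub>M\<^esub>}" unfolding sum_submods_def
    by (rule gen_least[OF zero_sub]) simp
  show "{\<zero>\<^bsub>M\<^esub>} \<subseteq> sum_submods R M K {}"
    using zero_in[OF sum_submods_sub[of "{}" K]] by simp
qed

lemma In_sub_carrier: "In_sub R M N \<subseteq> carrier M"
proof (cases "H_set R M N = {}")
  case True then show ?thesis unfolding In_sub_def by simp
next
  case False
  then obtain I where I: "I \<in> H_set R M N" by blast
  then have "ideal I R" unfolding H_set_def A_set_def by blast
  then have "I \<subseteq> carrier R" using ideal.axioms(1) additive_subgroup.a_subset by blast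
  then have "ideal_mod R M I \<subseteq> carrier M" using ideal_mod_sub submoduleE(1) by blast
  then show ?thesis unfolding In_sub_def using False I by auto
qed

lemma In_sub_incl: assumes "N \<subseteq> carrier M" shows "N \<subseteq> In_sub R M N"
  using assms unfolding In_sub_def H_set_def A_set_def by auto

lemma sum_submods_least: "submodule Z R M \<Longrightarrow> (\<forall>k\<in>J. K k \<subseteq> Z) \<Longrightarrow> sum_submods R M K J \<subseteq> Z"
  unfolding sum_submods_def by (rule gen_least) auto

lemma sum_submods_incl: "k \<in> J \<Longrightarrow> K k \<subseteq> sum_submods R M K J"
  unfolding sum_submods_def using gen_incl by blast

lemma claim:
  assumes "finite J" "PS_hollow R M N" "\<forall>i\<in>J. submodule (K i) R M" "N \<subseteq> sum_submods R M K J"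
  shows "N \<subseteq> {\<zero>\<^bsub>M\<^esub>} \<or> (\<exists>i\<in>J. N \<subseteq> In_sub R M (K i))"
  using assms(1,3,4)
proof (induction J rule: finite_induct)
  case empty then show ?case using sum_submods_empty by simp
next
  case (insert i J')
  let ?S = "sum_submods R M K J'"
  show ?case
  proof (cases "N \<subseteq> ?S")
    case True then show ?thesis using insert by auto
  next
    case False
    have NC: "N \<subseteq> carrier M" using assms(2) submoduleE(1) unfolding PS_hollow_def by blast
    have "N \<subseteq> In_sub R M (K i)"
    proof (cases "H_set R M (K i) = {}")
      case True then show ?thesis unfolding In_sub_def using NC by simp
    next
      case HF: False
      have "N \<subseteq> ideal_mod R M I" if I: "I \<in> H_set R M (K i)" for I
      proof -
        have id: "ideal I R" and KI: "K i \<subseteq> ideal_mod R M I" using I unfolding H_set_def A_set_def by auto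
        have IC: "I \<subseteq> carrier R" using id ideal.axioms(1) additive_subgroup.a_subset by blast
        have subI: "submodule (ideal_mod R M I) R M" using ideal_mod_sub[OF IC] .
        have subS: "submodule ?S R M" using sum_submods_sub insert by blast
        have "sum_submods R M K (insert i J') \<subseteq> ideal_mod R M I <+>\<^bsub>M\<^esub> ?S"
        proof (rule sum_submods_least[OF sum_sub[OF subI subS]], intro ballI)
          fix k assume k: "k \<in> insert i J'"
          show "K k \<subseteq> ideal_mod R M I <+>\<^bsub>M\<^esub> ?S"
          proof (cases "k = i")
            case True then show ?thesis using KI sum_incl1[OF subI subS] by blast
          next
            case False then show ?thesis using k sum_incl2[OF subI subS] sum_submods_incl[of k J' K] by blast
          qed
        qed
        then have "N \<subseteq> ideal_mod R M I <+>\<^bsub>M\<^esub> ?S" using insert.prems by blast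
        then show ?thesis using assms(2) id subS False unfolding PS_hollow_def by blast
      qed
      then show ?thesis unfolding In_sub_def using HF by auto
    qed
    then show ?thesis by blast
  qed
qed

end

lemma exists_minimal:
  assumes art: "artinian_cring R" and I: "I \<in> A_set R M N"
  shows "\<exists>J\<in>H_set R M N. J \<subseteq> I"
proof (rule ccontr)
  assume no: "\<not> ?thesis"
  define Q where "Q W \<longleftrightarrow> W \<in> A_set R M N \<and> W \<subseteq> I" for W
  have step: "\<exists>Y. Q Y \<and> Y \<subset> W" if QW: "Q W" for W
  proof -
    have W: "W \<in> A_set R M N" "W \<subseteq> I" using QW unfolding Q_def by auto
    have "W \<notin> H_set R M N" using no W(2) by blast
    then obtain Y where Y: "Y \<in> A_set R M N" "Y \<subseteq> W" "Y \<noteq> W" using W(1) unfolding H_set_def by blast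
    have "Q Y" unfolding Q_def using Y(1,2) W(2) by blast
    then show ?thesis using Y(2,3) by blast
  qed
  define f where "f = rec_nat I (\<lambda>_ W. SOME Y. Q Y \<and> Y \<subset> W)"
  have f0: "f 0 = I" and fS: "f (Suc k) = (SOME Y. Q Y \<and> Y \<subset> f k)" for k unfolding f_def by simp_all
  have ex: "Q (SOME Y. Q Y \<and> Y \<subset> W) \<and> (SOME Y. Q Y \<and> Y \<subset> W) \<subset> W" if "Q W" for W
    using someI_ex[where P="\<lambda>Y. Q Y \<and> Y \<subset> W", OF step[OF that]] .
  have Qk: "Q (f k)" for k
  proof (induction k)
    case 0
    show ?case using I f0 unfolding Q_def by simp
  next
    case (Suc k)
    show ?case unfolding fS using ex[OF Suc.IH] by (rule conjunct1)
  qed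
  have Qf: "f (Suc k) \<subset> f k" for k
  proof -
    have "(SOME Y. Q Y \<and> Y \<subset> f k) \<subset> f k" using ex[OF Qk[of k]] by (rule conjunct2)
    then show ?thesis by (subst fS)
  qed
  have "ideal (f k) R" for k using Qk[of k] unfolding Q_def A_set_def by simp
  moreover have "f (Suc k) \<subseteq> f k" for k using Qf[of k] by (rule psubset_imp_subset)
  ultimately have "(\<forall>k. ideal (f k) R) \<and> (\<forall>k. f (Suc k) \<subseteq> f k)" by blast
  moreover have "(\<forall>k. ideal (f k) R) \<and> (\<forall>k. f (Suc k) \<subseteq> f k) \<longrightarrow> (\<exists>N. \<forall>k\<ge>N. f k = f N)"
    using art unfolding artinian_cring_def by (rule conjunct2[THEN spec])
  ultimately obtain N0 where "\<forall>k\<ge>N0. f k = f N0" by blast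
  then have "f (Suc N0) = f N0" using le_Suc_eq by blast
  then show False using Qf[of N0] by simp
qed

theorem corollary5p24:
  fixes R :: "('a, 'c) ring_scheme" and M :: "('a, 'b, 'd) module_scheme"
    and n :: nat and K :: "nat \<Rightarrow> 'b set" and H :: "nat \<Rightarrow> 'a set set"
  assumes "artinian_cring R"
    and "module R M"
    and "carrier M \<noteq> {\<zero>\<^bsub>M\<^esub>}"
    and "min_PS_hollow_rep R M n K H"
    and "\<forall>i<n. \<forall>N. submodule N R M \<and> N \<subseteq> In_sub R M (K i) \<and> N \<noteq> {\<zero>\<^bsub>M\<^esub>}
            \<longrightarrow> H_PS_hollow R M (H i) N"
  shows "is_direct_sum R M n K"
proof -
  interpret module R M by (rule assms(2))
  have carr: "carrier M = sum_submods R M K {..<n}"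
    and HPS: "\<forall>i<n. H_PS_hollow R M (H i) (K i)"
    and incomp: "\<forall>i<n. \<forall>j<n. i \<noteq> j \<longrightarrow> \<not> In_sub R M (K i) \<subseteq> In_sub R M (K j)"
    using assms(4) unfolding min_PS_hollow_rep_def by blast+
  have subK: "submodule (K i) R M" if "i < n" for i
    using HPS that unfolding H_PS_hollow_def PS_hollow_def by blast
  have "K j \<inter> sum_submods R M K ({..<n} - {j}) = {\<zero>\<^bsub>M\<^esub>}" if j: "j < n" for j
  proof (rule ccontr)
    define S where "S = sum_submods R M K ({..<n} - {j})"
    define N where "N = K j \<inter> S"
    assume "K j \<inter> sum_submods R M K ({..<n} - {j}) \<noteq> {\<zero>\<^bsub>M\<^esub>}"
    then have Nne: "N \<noteq> {\<zero>\<^bsub>M\<^esub>}" unfolding N_def S_def .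
    have subS: "submodule S R M" unfolding S_def using subK by (intro sum_submods_sub) auto
    have subN: "submodule N R M" unfolding N_def using int_sub[OF subK[OF j] subS] .
    have KC: "K j \<subseteq> carrier M" using submoduleE(1)[OF subK[OF j]] .
    have NIn: "N \<subseteq> In_sub R M (K j)" using In_sub_incl[OF KC] unfolding N_def by blast
    have hN: "H_PS_hollow R M (H j) N" using assms(5) j subN NIn Nne by blast
    then have psN: "PS_hollow R M N" and HN: "H_set R M N = H j" unfolding H_PS_hollow_def by auto
    have HKj: "H_set R M (K j) = H j" using HPS j unfolding H_PS_hollow_def by blast
    have "N \<subseteq> {\<zero>\<^bsub>M\<^esub>} \<or> (\<exists>i\<in>{..<n} - {j}. N \<subseteq> In_sub R M (K i))"
      by (rule claim) (use psN subK in \<open>auto simp: N_def S_def\<close>)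
    moreover have "\<not> N \<subseteq> {\<zero>\<^bsub>M\<^esub>}" using Nne zero_in[OF subN] by blast
    ultimately obtain i where i: "i < n" "i \<noteq> j" and NIi: "N \<subseteq> In_sub R M (K i)" by blast
    have "In_sub R M (K j) \<subseteq> In_sub R M (K i)"
    proof (cases "H_set R M (K i) = {}")
      case True then show ?thesis using In_sub_carrier unfolding In_sub_def by simp
    next
      case False
      have "In_sub R M (K j) \<subseteq> ideal_mod R M I" if I: "I \<in> H_set R M (K i)" for I
      proof -
        have "N \<subseteq> ideal_mod R M I" using NIi False I unfolding In_sub_def by auto
        moreover have "ideal I R" using I unfolding H_set_def A_set_def by blast
        ultimately have "I \<in> A_set R M N" unfolding A_set_def by blast
        then obtain J0 where J0: "J0 \<in> H_set R M N" "J0 \<subseteq> I" using exists_minimal[OF assms(1)] by blast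
        then have J0': "J0 \<in> H_set R M (K j)" using HN HKj by simp
        then have "In_sub R M (K j) \<subseteq> ideal_mod R M J0" unfolding In_sub_def by auto
        also have "\<dots> \<subseteq> ideal_mod R M I" using ideal_mod_mono[OF J0(2)] .
        finally show ?thesis .
      qed
      then show ?thesis using False unfolding In_sub_def[of R M "K i"] by auto
    qed
    then show False using incomp i j by blast
  qed
  then show ?thesis unfolding is_direct_sum_def using carr by blast
qed

end
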